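(* Let $N,K\ge 1$, $\mathbf{g}\in\mathbb{C}^{N}$, $\mathbf{h}_{r,k}\in\mathbb{C}^{N}$, $h_{d,k}\in\mathbb{C}$ ($k=1,\dots,K$), with all entries of $\mathbf{g}$ and every $\mathbf{h}_{r,k}$ nonzero and every $h_{d,k}\ne0$. Let $\sigma^2,\sigma_r^2,P_r,T_{\max}>0$ and $E_k>0$. Put $\mathbf{q}_k=\mathrm{diag}(\mathbf{g}^H)\mathbf{h}_{r,k}$, $\mathbf{G}=\mathrm{diag}(|[\mathbf{g}]_1|^2,\dots,|[\mathbf{g}]_N|^2)$, $\mathbf{H}_{r,k}=\mathrm{diag}(|[\mathbf{h}_{r,k}]_1|^2,\dots,|[\mathbf{h}_{r,k}]_N|^2)$. Consider $$\max_{\tau,\{p_k\},\mathbf{v}}\ \tau\log_2\!\Big(1+\frac{\sum_{k=1}^K p_k|h_{d,k}+\mathbf{v}^H\mathbf{q}_k|^2}{\sigma^2+\sigma_r^2\mathbf{v}^H\mathbf{G}\mathbf{v}}\Big)$$ over $\tau\in\mathbb{R}$, $p_k\in\mathbb{R}$, $\mathbf{v}\in\mathbb{C}^N$, subject to $\tau p_k\le E_k$ for all $k$; $\tau\le T_{\max}$; $\tau\ge0$, $p_k\ge 0$ for all $k$; and $\sum_{k=1}^K p_k\mathbf{v}^H\mathbf{H}_{r,k}\mathbf{v}+\sigma_r^2\|\mathbf{v}\|^2\le P_r$. Then at any optimal solution, $\tau=T_{\max}$.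
   Context: This is the sum-throughput maximization for active-IRS-aided NOMA uplink: all devices transmit simultaneously for time $\tau$ with powers $p_k$ and energies $E_k$, sharing one IRS reflection/amplification vector $\mathbf{v}$; $P_r$ is the IRS amplification power budget. *)

theory Defs
  imports "HOL-Analysis.Analysis"
begin

text \<open>Vectors in C^N are represented as complex ^ 'n (N = CARD('n)); users k = 1..K are
  indexed by a finite type 'k (K = CARD('k)).\<close>

definition herm :: "complex ^ 'n \<Rightarrow> complex ^ 'n \<Rightarrow> complex" where
  "herm v w = (\<Sum>i\<in>UNIV. cnj (v $ i) * w $ i)"

definition diag_mat :: "('n \<Rightarrow> complex) \<Rightarrow> complex ^ 'n ^ 'n" where
  "diag_mat d = (\<chi> i j. if i = j then d i else 0)"

definition qvec :: "complex ^ 'n \<Rightarrow> complex ^ 'n \<Rightarrow> complex ^ 'n" where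
  "qvec g hr = diag_mat (\<lambda>i. cnj (g $ i)) *v hr"

definition sqdiag :: "complex ^ 'n \<Rightarrow> complex ^ 'n ^ 'n" where
  "sqdiag x = diag_mat (\<lambda>i. complex_of_real ((cmod (x $ i))\<^sup>2))"

definition objective ::
  "complex ^ 'n \<Rightarrow> ('k \<Rightarrow> complex ^ 'n) \<Rightarrow> ('k \<Rightarrow> complex) \<Rightarrow> real \<Rightarrow> real
    \<Rightarrow> real \<Rightarrow> ('k::finite \<Rightarrow> real) \<Rightarrow> complex ^ 'n \<Rightarrow> real" where
  "objective g hr hdir s2 sr2 \<tau> p v =
     \<tau> * log 2 (1 + (\<Sum>k\<in>UNIV. p k * (cmod (hdir k + herm v (qvec g (hr k))))\<^sup>2)
                    / (s2 + sr2 * Re (herm v (sqdiag g *v v))))"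

definition feasible ::
  "('k \<Rightarrow> complex ^ 'n) \<Rightarrow> real \<Rightarrow> real \<Rightarrow> real \<Rightarrow> ('k \<Rightarrow> real)
    \<Rightarrow> real \<Rightarrow> ('k::finite \<Rightarrow> real) \<Rightarrow> complex ^ 'n \<Rightarrow> bool" where
  "feasible hr sr2 Pr Tmax E \<tau> p v \<longleftrightarrow>
     (\<forall>k. \<tau> * p k \<le> E k) \<and> \<tau> \<le> Tmax \<and> \<tau> \<ge> 0 \<and> (\<forall>k. p k \<ge> 0) \<and>
     (\<Sum>k\<in>UNIV. p k * Re (herm v (sqdiag (hr k) *v v))) + sr2 * (norm v)\<^sup>2 \<le> Pr"

end

theory Submission
  imports Defs
begin

lemma herm_sqdiag_re:
  "Re (herm v (sqdiag x *v v)) = (\<Sum>i\<in>UNIV. (cmod (v $ i))\<^sup>2 * (cmod (x $ i))\<^sup>2)"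
proof -
  have "(sqdiag x *v v) $ i = complex_of_real ((cmod (x $ i))\<^sup>2) * v $ i" for i
    unfolding sqdiag_def diag_mat_def matrix_vector_mult_def
    by (simp add: if_distrib cong: if_cong) (simp add: if_distrib_fun, simp only: mult_zero_left, simp add: sum.delta)
  hence "herm v (sqdiag x *v v) = (\<Sum>i\<in>UNIV. cnj (v $ i) * (complex_of_real ((cmod (x $ i))\<^sup>2) * v $ i))"
    unfolding herm_def by simp
  also have "Re \<dots> = (\<Sum>i\<in>UNIV. (cmod (v $ i))\<^sup>2 * (cmod (x $ i))\<^sup>2)"
  proof -
    have "cnj (v $ i) * (complex_of_real ((cmod (x $ i))\<^sup>2) * v $ i)
        = complex_of_real ((cmod (v $ i))\<^sup>2 * (cmod (x $ i))\<^sup>2)" for i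
      using complex_norm_square[of "v $ i"]
      by (simp only: of_real_mult) (simp add: algebra_simps)
    hence "(\<Sum>i\<in>UNIV. cnj (v $ i) * (complex_of_real ((cmod (x $ i))\<^sup>2) * v $ i))
        = (\<Sum>i\<in>UNIV. complex_of_real ((cmod (v $ i))\<^sup>2 * (cmod (x $ i))\<^sup>2))"
      by (rule sum.cong[OF refl])
    thus ?thesis by (simp only: Re_sum Re_complex_of_real)
  qed
  finally show ?thesis .
qed

lemma herm_sqdiag_nonneg: "Re (herm v (sqdiag x *v v)) \<ge> 0"
  unfolding herm_sqdiag_re by (intro sum_nonneg) simp

lemma ln_strict_concave:
  fixes a x :: real
  assumes "0 < a" "a < 1" "0 < x"
  shows "a * ln (1 + x) < ln (1 + a * x)"
proof -
  define u where "u = 1 + a * x"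
  define w where "w = 1 + x"
  have u: "u > 0" "w > 0" "w > u" using assms by (auto simp: u_def w_def add_pos_pos)
  have "w / u \<noteq> 1" using u by auto
  hence l1: "ln (w / u) < w / u - 1"
    using ln_le_minus_one[of "w/u"] ln_eq_minus_one[of "w/u"] u by fastforce
  have l2: "ln (1 / u) \<le> 1 / u - 1" using ln_le_minus_one[of "1/u"] u by simp
  have "a * ln (w / u) + (1 - a) * ln (1 / u) < a * (w / u - 1) + (1 - a) * (1 / u - 1)"
    using l1 l2 assms by (intro add_less_le_mono mult_strict_left_mono mult_left_mono) auto
  also have "\<dots> = 0" using u by (simp add: u_def w_def field_simps)
  finally have "a * ln (w / u) + (1 - a) * ln (1 / u) < 0" .
  moreover have "a * ln (w / u) + (1 - a) * ln (1 / u) = a * ln w - ln u"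
    using u by (simp add: ln_div algebra_simps)
  ultimately show ?thesis by (simp add: u_def w_def)
qed

theorem lemma2:
  fixes g :: "complex ^ 'n"
    and hr :: "'k::finite \<Rightarrow> complex ^ 'n"
    and hdir :: "'k \<Rightarrow> complex"
    and s2 sr2 Pr Tmax :: real
    and E :: "'k \<Rightarrow> real"
    and \<tau> :: real and p :: "'k \<Rightarrow> real" and v :: "complex ^ 'n"
  assumes g_nz: "\<forall>i. g $ i \<noteq> 0"
    and hr_nz: "\<forall>k i. hr k $ i \<noteq> 0"
    and hd_nz: "\<forall>k. hdir k \<noteq> 0"
    and pos: "s2 > 0" "sr2 > 0" "Pr > 0" "Tmax > 0"
    and E_pos: "\<forall>k. E k > 0"
    and feas: "feasible hr sr2 Pr Tmax E \<tau> p v"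
    and opt: "\<forall>\<tau>' p' v'. feasible hr sr2 Pr Tmax E \<tau>' p' v' \<longrightarrow>
                 objective g hr hdir s2 sr2 \<tau>' p' v' \<le> objective g hr hdir s2 sr2 \<tau> p v"
  shows "\<tau> = Tmax"
proof (rule ccontr)
  assume ne: "\<tau> \<noteq> Tmax"
  have F: "\<forall>k. \<tau> * p k \<le> E k" "\<tau> \<le> Tmax" "\<tau> \<ge> 0" "\<forall>k. p k \<ge> 0"
    "(\<Sum>k\<in>UNIV. p k * Re (herm v (sqdiag (hr k) *v v))) + sr2 * (norm v)\<^sup>2 \<le> Pr"
    using feas unfolding feasible_def by auto
  have lt: "\<tau> < Tmax" using F ne by auto
  define S where "S = (\<Sum>k\<in>UNIV. p k * (cmod (hdir k + herm v (qvec g (hr k))))\<^sup>2)"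
  define D where "D = s2 + sr2 * Re (herm v (sqdiag g *v v))"
  have Dpos: "D > 0" unfolding D_def using pos herm_sqdiag_nonneg[of v g]
    by (smt (verit) mult_nonneg_nonneg)
  have Snn: "S \<ge> 0" unfolding S_def using F(4) by (intro sum_nonneg) simp
  have objv: "objective g hr hdir s2 sr2 \<tau> p v = \<tau> * log 2 (1 + S / D)"
    unfolding objective_def S_def D_def by simp
  define p0 where "p0 = (\<lambda>k. E k / Tmax)"
  have herm0: "herm 0 w = 0" for w :: "complex ^ 'n" unfolding herm_def by simp
  have f0: "feasible hr sr2 Pr Tmax E Tmax p0 0"
    unfolding feasible_def p0_def using pos E_pos by (auto simp: herm0 less_imp_le)
  define S0 where "S0 = (\<Sum>k\<in>UNIV. p0 k * (cmod (hdir k))\<^sup>2)"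
  have S0pos: "S0 > 0" unfolding S0_def p0_def
    using pos E_pos hd_nz by (intro sum_pos) auto
  have o0: "objective g hr hdir s2 sr2 Tmax p0 0 = Tmax * log 2 (1 + S0 / s2)"
    unfolding objective_def S0_def by (simp add: herm0)
  have "S0 / s2 > 0" using S0pos pos by simp
  hence "log 2 (1 + S0 / s2) > 0" by simp
  hence "objective g hr hdir s2 sr2 Tmax p0 0 > 0" using o0 pos by simp
  hence opos: "\<tau> * log 2 (1 + S / D) > 0" using opt f0 objv by fastforce
  have taupos: "\<tau> > 0" using opos F(3)
    by (metis less_eq_real_def mult_zero_left order_less_irrefl)
  have xpos: "S / D > 0"
  proof (rule ccontr)
    assume "\<not> S / D > 0"
    hence "S / D = 0" using Snn Dpos by (smt (verit) divide_nonneg_pos)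
    thus False using opos Dpos by simp
  qed
  define a where "a = \<tau> / Tmax"
  have a: "0 < a" "a < 1" using taupos lt pos by (auto simp: a_def)
  define p1 where "p1 = (\<lambda>k. a * p k)"
  have f1: "feasible hr sr2 Pr Tmax E Tmax p1 v"
    unfolding feasible_def
  proof (intro conjI allI)
    fix k show "Tmax * p1 k \<le> E k" using F(1) pos by (simp add: p1_def a_def)
  next
    fix k show "0 \<le> p1 k" using F(4) a by (simp add: p1_def)
  next
    have "(\<Sum>k\<in>UNIV. p1 k * Re (herm v (sqdiag (hr k) *v v)))
          \<le> (\<Sum>k\<in>UNIV. p k * Re (herm v (sqdiag (hr k) *v v)))"
    proof (intro sum_mono)
      fix k
      have "0 \<le> p k * Re (herm v (sqdiag (hr k) *v v))"
        using F(4) by (intro mult_nonneg_nonneg) (auto simp: herm_sqdiag_nonneg)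
      thus "p1 k * Re (herm v (sqdiag (hr k) *v v)) \<le> p k * Re (herm v (sqdiag (hr k) *v v))"
        using a unfolding p1_def by (smt (verit) mult.assoc mult_left_le_one_le)
    qed
    thus "(\<Sum>k\<in>UNIV. p1 k * Re (herm v (sqdiag (hr k) *v v))) + sr2 * (norm v)\<^sup>2 \<le> Pr"
      using F(5) by linarith
  qed (use pos in auto)
  have o1: "objective g hr hdir s2 sr2 Tmax p1 v = Tmax * log 2 (1 + a * S / D)"
    unfolding objective_def S_def D_def p1_def by (simp add: sum_distrib_left mult.assoc)
  have key: "a * ln (1 + S / D) < ln (1 + a * (S / D))"
    using ln_strict_concave[OF a xpos] .
  have "\<tau> * log 2 (1 + S / D) = Tmax * (a * ln (1 + S / D)) / ln 2"
    using pos by (simp add: a_def log_def)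
  also have "\<dots> < Tmax * ln (1 + a * (S / D)) / ln 2"
    using key pos by (intro divide_strict_right_mono mult_strict_left_mono) auto
  also have "\<dots> = objective g hr hdir s2 sr2 Tmax p1 v"
    using o1 by (simp add: log_def)
  finally show False using opt f1 objv by fastforce
qed

end
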